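(* Assume the setting and standing assumptions described in the context. Let $0<\tau_i<\tau_{i+1}$ and let $M_{\tau_i}$, $M_{\tau_{i+1}}$ be the corresponding isochronous manifolds. Then for every $x\in M_{\tau_i}$ there exists a unique $\lambda_x\in(0,1)$ such that $\lambda_x x\in M_{\tau_{i+1}}$, and there is no $\kappa_x\geq 1$ such that $\kappa_x x\in M_{\tau_{i+1}}$.
   Context: Let $f:\mathbb{R}^n\times\mathbb{R}^m\to\mathbb{R}^n$ and a feedback law $\upsilon:\mathbb{R}^n\to\mathbb{R}^m$ be given. Define the extended (event-triggered) vector field $F:\mathbb{R}^{2n}\to\mathbb{R}^{2n}$ by $F(z,e)=\big(f(z,\upsilon(z+e)),\,-f(z,\upsilon(z+e))\big)$ (state $\xi=(\zeta,\varepsilon)$, where $\varepsilon$ is the measurement error). For $x\in\mathbb{R}^n$, $\xi(t;x)$ denotes the solution of $\dot\xi=F(\xi)$ with $\xi(0;x)=(x,0)$. A triggering function $\phi:\mathbb{R}^{2n}\to\mathbb{R}$ is given, and the inter-event time of $x$ is $\tau(x)=\inf\{t>0:\phi(\xi(t;x))=0\}$. The isochronous manifold of time $\tau_\star>0$ is $M_{\tau_\star}=\{x\in\mathbb{R}^n:\tau(x)=\tau_\star\}$. Standing assumptions: (i) $F$ is smooth and homogeneous of degree $\alpha\ge 1$ with all weights equal to $1$, i.e. $F(\lambda\xi)=\lambda^{\alpha+1}F(\xi)$ for all $\lambda>0$; (ii) $\phi$ is smooth and homogeneous of degree $\theta\geq1$ with weights $1$, i.e. $\phi(\lambda\xi)=\lambda^{\theta+1}\phi(\xi)$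 for all $\lambda>0$; (iii) for every $x\in\mathbb{R}^n\setminus\{0\}$, $\phi((x,0))<0$ and there exists $t_x\in(0,\infty)$ with $\phi(\xi(t_x;x))=0$; (iv) compact sets $\mathrm{Z}\subset\mathbb{R}^n$ and $\Xi\subset\mathbb{R}^{2n}$, each containing a neighbourhood of the origin, are given such that for all $x\in\mathrm{Z}$ and $t\ge0$, $\phi(\xi(t;x))\le 0$ implies $\xi(t;x)\in\Xi$; (v) the origin is the only equilibrium of $\dot\zeta=f(\zeta,\upsilon(\zeta))$. *)

theory Defs
  imports "HOL-Analysis.Analysis"
begin

text \<open>This is the greatest-fixed-point description of "all iterated directional
  derivatives exist everywhere", i.e. C-infinity on a finite-dimensional space.\<close>
definition smooth_fun :: "('a::euclidean_space \<Rightarrow> 'b::real_normed_vector) \<Rightarrow> bool" where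
  "smooth_fun g \<longleftrightarrow> (\<exists>S. g \<in> S \<and> (\<forall>h\<in>S. \<exists>h'. (\<forall>x. (h has_derivative h' x) (at x))
                                 \<and> (\<forall>v. (\<lambda>x. h' x v) \<in> S)))"

definition ext_field ::
  "('n \<Rightarrow> 'm \<Rightarrow> 'n::real_normed_vector) \<Rightarrow> ('n \<Rightarrow> 'm) \<Rightarrow> 'n \<times> 'n \<Rightarrow> 'n \<times> 'n" where
  "ext_field f u = (\<lambda>(z, e). (f z (u (z + e)), - f z (u (z + e))))"

definition is_sol :: "('a \<times> 'a \<Rightarrow> 'a \<times> 'a) \<Rightarrow> 'a::real_normed_vector \<Rightarrow> real
                      \<Rightarrow> (real \<Rightarrow> 'a \<times> 'a) \<Rightarrow> bool" where
  "is_sol F x T y \<longleftrightarrow> 0 \<le> T \<and> y 0 = (x, 0) \<and>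
     (\<forall>s\<in>{0..T}. (y has_vector_derivative F (y s)) (at s within {0..T}))"

text \<open>Inter-event time tau(x) = inf {t > 0. phi(xi(t;x)) = 0}; xi(t;x) is the (unique, F being
  smooth) solution value at t, so we quantify over solutions defined on [0,t].\<close>
definition inter_event_time :: "('a \<times> 'a \<Rightarrow> 'a \<times> 'a) \<Rightarrow> ('a \<times> 'a \<Rightarrow> real)
                                 \<Rightarrow> 'a::real_normed_vector \<Rightarrow> real" where
  "inter_event_time F \<phi> x = Inf {t. t > 0 \<and> (\<exists>y. is_sol F x t y \<and> \<phi> (y t) = 0)}"

definition isochronous :: "('a \<times> 'a \<Rightarrow> 'a \<times> 'a) \<Rightarrow> ('a \<times> 'a \<Rightarrow> real) \<Rightarrow> real
                           \<Rightarrow> 'a::real_normed_vector set" where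
  "isochronous F \<phi> \<tau>s = {x. inter_event_time F \<phi> x = \<tau>s}"

end

theory Submission imports Defs begin

lemma scale_sol:
  fixes F :: "'a::real_normed_vector \<times> 'a \<Rightarrow> 'a \<times> 'a"
  assumes hom: "\<And>l \<xi>. l > 0 \<Longrightarrow> F (l *\<^sub>R \<xi>) = (l powr (\<alpha> + 1)) *\<^sub>R F \<xi>"
    and l: "l > 0" and sol: "is_sol F x T y"
  shows "is_sol F (l *\<^sub>R x) (T / l powr \<alpha>) (\<lambda>t. l *\<^sub>R y (l powr \<alpha> * t))"
proof -
  define c where "c = l powr \<alpha>"
  have c: "c > 0" using l by (simp add: c_def)
  have T: "T \<ge> 0" and y0: "y 0 = (x, 0)"
    and d: "\<And>s. s \<in> {0..T} \<Longrightarrow> (y has_vector_derivative F (y s)) (at s within {0..T})"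
    using sol by (auto simp: is_sol_def)
  have "((\<lambda>t. l *\<^sub>R y (c * t)) has_vector_derivative F (l *\<^sub>R y (c * s))) (at s within {0..T/c})"
    if s: "s \<in> {0..T/c}" for s
  proof -
    have cs: "c * s \<in> {0..T}" using s c by (auto simp: field_simps)
    have im: "(\<lambda>t. c * t) ` {0..T/c} \<subseteq> {0..T}" using c by (auto simp: field_simps)
    have d1: "((\<lambda>t. c * t) has_vector_derivative c) (at s within {0..T/c})"
      by (auto intro!: derivative_eq_intros)
    have d2: "(y has_vector_derivative F (y (c * s))) (at (c * s) within (\<lambda>t. c * t) ` {0..T/c})"
      by (rule has_vector_derivative_within_subset[OF d[OF cs] im])
    have "((y \<circ> (\<lambda>t. c * t)) has_vector_derivative (c *\<^sub>R F (y (c * s)))) (at s within {0..T/c})"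
      by (rule vector_diff_chain_within[OF d1 d2])
    note dd = this
    have "((\<lambda>t. l *\<^sub>R y (c * t)) has_vector_derivative l *\<^sub>R (c *\<^sub>R F (y (c * s)))) (at s within {0..T/c})"
      using has_vector_derivative_scaleR[OF DERIV_const[of l] dd] by (simp add: o_def)
    moreover have "l *\<^sub>R (c *\<^sub>R F (y (c * s))) = F (l *\<^sub>R y (c * s))"
      using l by (simp add: hom c_def powr_add)
    ultimately show ?thesis by simp
  qed
  then show ?thesis using T c y0 by (simp add: is_sol_def c_def)
qed

definition hitset where
  "hitset F \<phi> x = {t. t > 0 \<and> (\<exists>y. is_sol F x t y \<and> \<phi> (y t) = 0)}"

lemma hitset_scale:
  fixes F :: "'a::real_normed_vector \<times> 'a \<Rightarrow> 'a \<times> 'a"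
  assumes hom: "\<And>l \<xi>. l > 0 \<Longrightarrow> F (l *\<^sub>R \<xi>) = (l powr (\<alpha> + 1)) *\<^sub>R F \<xi>"
    and phom: "\<And>l \<xi>. l > 0 \<Longrightarrow> \<phi> (l *\<^sub>R \<xi>) = l powr (\<theta> + 1) * \<phi> \<xi>"
    and l: "l > 0"
  shows "hitset F \<phi> (l *\<^sub>R x) = (\<lambda>s. s / l powr \<alpha>) ` hitset F \<phi> x"
proof
  show "hitset F \<phi> (l *\<^sub>R x) \<subseteq> (\<lambda>s. s / l powr \<alpha>) ` hitset F \<phi> x"
  proof
    fix t assume "t \<in> hitset F \<phi> (l *\<^sub>R x)"
    then obtain z where t: "t > 0" and z: "is_sol F (l *\<^sub>R x) t z" "\<phi> (z t) = 0"
      by (auto simp: hitset_def)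
    have il: "inverse l > 0" using l by simp
    have e: "inverse l powr \<alpha> = inverse (l powr \<alpha>)" using l by (simp add: inverse_powr)
    have "is_sol F (inverse l *\<^sub>R (l *\<^sub>R x)) (t / inverse l powr \<alpha>) (\<lambda>s. inverse l *\<^sub>R z (inverse l powr \<alpha> * s))"
      by (rule scale_sol[OF hom il z(1)])
    then have s: "is_sol F x (t * l powr \<alpha>) (\<lambda>s. inverse l *\<^sub>R z (inverse (l powr \<alpha>) * s))"
      using l by (simp add: e divide_inverse)
    have "\<phi> (inverse l *\<^sub>R z (inverse (l powr \<alpha>) * (t * l powr \<alpha>))) = 0"
    proof -
      have "inverse (l powr \<alpha>) * (t * l powr \<alpha>) = t" using l by simp
      then show ?thesis using z(2) by (simp only: phom[OF il])
    qed
    then have "t * l powr \<alpha> \<in> hitset F \<phi> x" using s t l by (auto simp: hitset_def)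
    then show "t \<in> (\<lambda>s. s / l powr \<alpha>) ` hitset F \<phi> x"
      using l by (auto intro!: image_eqI[where x="t * l powr \<alpha>"])
  qed
next
  show "(\<lambda>s. s / l powr \<alpha>) ` hitset F \<phi> x \<subseteq> hitset F \<phi> (l *\<^sub>R x)"
  proof
    fix t assume "t \<in> (\<lambda>s. s / l powr \<alpha>) ` hitset F \<phi> x"
    then obtain s y where t: "t = s / l powr \<alpha>" "s > 0" and y: "is_sol F x s y" "\<phi> (y s) = 0"
      by (auto simp: hitset_def)
    have "is_sol F (l *\<^sub>R x) t (\<lambda>t. l *\<^sub>R y (l powr \<alpha> * t))"
      using scale_sol[OF hom l y(1)] t by simp
    moreover have "\<phi> (l *\<^sub>R y (l powr \<alpha> * t)) = 0" using l t y(2) by (simp add: phom)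
    ultimately show "t \<in> hitset F \<phi> (l *\<^sub>R x)" using t l by (auto simp: hitset_def)
  qed
qed

lemma Inf_div:
  fixes S :: "real set" and c :: real
  assumes "S \<noteq> {}" "\<And>s. s \<in> S \<Longrightarrow> s > 0" "c > 0"
  shows "Inf ((\<lambda>s. s / c) ` S) = Inf S / c"
proof (rule antisym)
  have bS: "bdd_below S" using assms(2) by (auto intro!: bdd_belowI[where m=0] less_imp_le)
  have bS': "bdd_below ((\<lambda>s. s / c) ` S)" using assms(2,3)
    by (auto intro!: bdd_belowI[where m=0] less_imp_le)
  have "c * Inf ((\<lambda>s. s / c) ` S) \<le> Inf S"
  proof (rule cInf_greatest[OF assms(1)])
    fix s assume "s \<in> S"
    then have "Inf ((\<lambda>s. s / c) ` S) \<le> s / c" by (intro cInf_lower bS') auto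
    then show "c * Inf ((\<lambda>s. s / c) ` S) \<le> s" using assms(3) by (simp add: field_simps)
  qed
  then show "Inf ((\<lambda>s. s / c) ` S) \<le> Inf S / c" using assms(3) by (simp add: field_simps)
  show "Inf S / c \<le> Inf ((\<lambda>s. s / c) ` S)"
  proof (rule cInf_greatest)
    show "(\<lambda>s. s / c) ` S \<noteq> {}" using assms(1) by simp
    fix t assume "t \<in> (\<lambda>s. s / c) ` S"
    then obtain s where "s \<in> S" "t = s / c" by auto
    then show "Inf S / c \<le> t" using assms(3) cInf_lower[OF _ bS] by (simp add: divide_right_mono)
  qed
qed

theorem proposition2:
  fixes f :: "real^'n \<Rightarrow> real^'m \<Rightarrow> real^'n"
    and \<upsilon> :: "real^'n \<Rightarrow> real^'m"
    and \<phi> :: "((real^'n) \<times> (real^'n)) \<Rightarrow> real"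
    and \<alpha> \<theta> \<tau>i \<tau>j :: real
    and Z :: "(real^'n) set" and \<Xi> :: "((real^'n) \<times> (real^'n)) set"
  assumes F_smooth: "smooth_fun (ext_field f \<upsilon>)"
    and \<alpha>: "\<alpha> \<ge> 1"
    and F_hom: "\<And>l \<xi>. l > 0 \<Longrightarrow> ext_field f \<upsilon> (l *\<^sub>R \<xi>) = (l powr (\<alpha> + 1)) *\<^sub>R ext_field f \<upsilon> \<xi>"
    and \<phi>_smooth: "smooth_fun \<phi>"
    and \<theta>: "\<theta> \<ge> 1"
    and \<phi>_hom: "\<And>l \<xi>. l > 0 \<Longrightarrow> \<phi> (l *\<^sub>R \<xi>) = l powr (\<theta> + 1) * \<phi> \<xi>"
    and \<phi>_neg: "\<And>x. x \<noteq> 0 \<Longrightarrow> \<phi> (x, 0) < 0"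
    and \<phi>_hit: "\<And>x. x \<noteq> 0 \<Longrightarrow> \<exists>t>0. \<exists>y. is_sol (ext_field f \<upsilon>) x t y \<and> \<phi> (y t) = 0"
    and Z: "compact Z" "0 \<in> interior Z"
    and \<Xi>: "compact \<Xi>" "0 \<in> interior \<Xi>"
    and Z_\<Xi>: "\<And>x t y. x \<in> Z \<Longrightarrow> t \<ge> 0 \<Longrightarrow> is_sol (ext_field f \<upsilon>) x t y \<Longrightarrow> \<phi> (y t) \<le> 0 \<Longrightarrow> y t \<in> \<Xi>"
    and equil: "\<And>z. f z (\<upsilon> z) = 0 \<longleftrightarrow> z = 0"
    and \<tau>: "0 < \<tau>i" "\<tau>i < \<tau>j"
    and x: "x \<in> isochronous (ext_field f \<upsilon>) \<phi> \<tau>i"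
  shows "(\<exists>!l. l \<in> {0<..<1} \<and> l *\<^sub>R x \<in> isochronous (ext_field f \<upsilon>) \<phi> \<tau>j)
         \<and> \<not> (\<exists>k\<ge>1. k *\<^sub>R x \<in> isochronous (ext_field f \<upsilon>) \<phi> \<tau>j)"
proof -
  let ?F = "ext_field f \<upsilon>"
  have tau_eq: "inter_event_time ?F \<phi> = (\<lambda>x. Inf (hitset ?F \<phi> x))"
    by (auto simp: inter_event_time_def hitset_def fun_eq_iff)
  have hpos: "\<And>x s. s \<in> hitset ?F \<phi> x \<Longrightarrow> s > 0" by (auto simp: hitset_def)
  have phi0: "\<phi> 0 = 0"
  proof -
    have "\<phi> ((2::real) *\<^sub>R 0) = 2 powr (\<theta> + 1) * \<phi> 0" by (rule \<phi>_hom) simp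
    moreover have "(2::real) powr (\<theta> + 1) > 2 powr 0" using \<theta> by (intro powr_less_mono) auto
    ultimately show ?thesis using \<theta> by simp
  qed
  have x0: "x \<noteq> 0"
  proof
    assume "x = 0"
    have F0: "?F (0, 0) = 0" using equil[of 0] by (simp add: ext_field_def zero_prod_def)
    have "hitset ?F \<phi> 0 = {0<..}"
    proof (auto simp: hitset_def)
      fix t :: real assume "t > 0"
      then show "\<exists>y. is_sol ?F 0 t y \<and> \<phi> (y t) = 0"
        using F0 phi0 has_vector_derivative_const[of "(0::real^'n, 0::real^'n)"] by (intro exI[of _ "\<lambda>_. (0, 0)"]) (auto simp: is_sol_def zero_prod_def)
    qed
    then have "inter_event_time ?F \<phi> x = 0" using \<open>x = 0\<close> by (simp add: tau_eq)
    then show False using x \<tau> by (simp add: isochronous_def)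
  qed
  have ne: "hitset ?F \<phi> x \<noteq> {}" using \<phi>_hit[OF x0] by (auto simp: hitset_def)
  have ti: "Inf (hitset ?F \<phi> x) = \<tau>i" using x by (simp add: isochronous_def tau_eq)
  have scale: "inter_event_time ?F \<phi> (l *\<^sub>R x) = \<tau>i / l powr \<alpha>" if "l > 0" for l
    using hitset_scale[OF F_hom \<phi>_hom that, of x] Inf_div[OF ne hpos, where c="l powr \<alpha>"] that ti
    by (simp add: tau_eq)
  have mem: "l *\<^sub>R x \<in> isochronous ?F \<phi> \<tau>j \<longleftrightarrow> l powr \<alpha> = \<tau>i / \<tau>j" if "l > 0" for l
    using scale[OF that] that \<tau> by (auto simp: isochronous_def field_simps)
  define l0 where "l0 = (\<tau>i / \<tau>j) powr (1 / \<alpha>)"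
  have r: "0 < \<tau>i / \<tau>j" "\<tau>i / \<tau>j < 1" using \<tau> by auto
  have l0: "l0 > 0" "l0 < 1" using r \<alpha> powr_less_mono2[of "1/\<alpha>" "\<tau>i / \<tau>j" 1]
    by (auto simp: l0_def)
  have "l0 powr \<alpha> = \<tau>i / \<tau>j" using \<alpha> r \<tau> by (simp add: l0_def powr_powr)
  then have ex: "l0 \<in> {0<..<1} \<and> l0 *\<^sub>R x \<in> isochronous ?F \<phi> \<tau>j" using l0 mem by auto
  have uniq: "l = l0" if "l \<in> {0<..<1}" "l *\<^sub>R x \<in> isochronous ?F \<phi> \<tau>j" for l
  proof -
    have "l powr \<alpha> = \<tau>i / \<tau>j" using that mem by auto
    then have "(l powr \<alpha>) powr (1/\<alpha>) = l0" by (simp add: l0_def)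
    then show ?thesis using that \<alpha> by (simp add: powr_powr)
  qed
  have no: "\<not> (k *\<^sub>R x \<in> isochronous ?F \<phi> \<tau>j)" if "k \<ge> 1" for k
  proof
    assume "k *\<^sub>R x \<in> isochronous ?F \<phi> \<tau>j"
    then have "k powr \<alpha> = \<tau>i / \<tau>j" using that mem by auto
    moreover have "k powr \<alpha> \<ge> 1" using that \<alpha> by (simp add: ge_one_powr_ge_zero)
    ultimately show False using r by simp
  qed
  show ?thesis using ex uniq no by blast
qed

end
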